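(* Fix $n$. For every $\breve x\in\mathcal S^n$ and every $\breve z\in\breve{\mathcal Z}^n(\breve x)$ there exists $u=(u^c,u^s)\in\Delta_I\times\Delta_J$ (depending on $\breve x,\breve z$) such that $$b^n(\breve x,\breve z)=h^n-B^n_1\big(\breve x-\langle e,\breve x\rangle^+u^c\big)+B^n_2u^s\langle e,\breve x\rangle^-+\breve\zeta^n(\breve x,\breve z)\big(B^n_1u^c+B^n_2u^s\big).$$ Moreover, for the matrices $B^n_1,B^n_2$ associated with any fixed $(\hat\imath,\hat\jmath)\in\mathcal E$, the column $\hat\jmath$ of $B^n_2$ is identically zero, and there is an ordering of the classes in which $\hat\imath$ is last such that, in that ordering, $B^n_1$ is lower triangular with positive diagonal entries and its last diagonal entry equals $\mu^n_{\hat\imath\hat\jmath}$.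
   Context: Network: $\mathcal I=\{1,\dots,I\}$, $\mathcal J=\{1,\dots,J\}$, edges $\mathcal E\subset\mathcal I\times\mathcal J$ with the bipartite graph $\mathcal G=(\mathcal I\cup\mathcal J,\mathcal E)$ a tree; $i\sim j$ iff $(i,j)\in\mathcal E$, $\mathcal J(i)=\{j:i\sim j\}$, $\mathcal I(j)=\{i:i\sim j\}$; $\mathbb R^{\mathcal G}$ (resp. $\mathbb Z^{\mathcal G}_+$) are arrays $[z_{ij}]\in\mathbb R^{I\times J}$ (resp. with nonnegative integer entries) vanishing for $i\not\sim j$. For each $n$: arrival rates $\lambda^n_i>0$, service rates $\mu^n_{ij}>0$, pool sizes $N^n_j\in\mathbb N$, with the Halfin–Whitt asymptotics $\lambda^n_i/n\to\lambda_i>0$, $N^n_j/n\to\nu_j>0$, $\mu^n_{ij}\to\mu_{ij}>0$, and $(\lambda^n_i-n\lambda_i)/\sqrt n$, $\sqrt n(\mu^n_{ij}-\mu_{ij})$, $\sqrt n(N^n_j/n-\nu_j)$ convergent. Complete resource pooling: the LP "minimize $\max_j\sum_i\xi_{ij}$ over nonnegative $\xi\in\mathbb R^{\mathcal G}$ subject to $\sum_j\mu_{ij}\nu_j\xi_{ij}=\lambda_i$ $\forall i$" has a unique solution $\xi^*$, with $\sum_i\xi^*_{ij}=1$ for all $j$ and $\xi^*_{ij}>0$ for $i\sim j$. The map $\Psi$ and matrices: let $\mathcal D=\{(\alpha,\beta)\in\mathbb R^I\times\mathbb R^J:\sum_i\alpha_i=\sum_j\beta_j\}$ and let $\Psi:\mathcal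 D\to\mathbb R^{\mathcal G}$ be the unique linear map with $\sum_j\Psi_{ij}(\alpha,\beta)=\alpha_i$ for all $i$ and $\sum_i\Psi_{ij}(\alpha,\beta)=\beta_j$ for all $j$ (unique since $\mathcal G$ is a tree). Given $(\hat\imath,\hat\jmath)\in\mathcal E$, $B^n_1\in\mathbb R^{I\times I}$, $B^n_2\in\mathbb R^{I\times J}$ are the unique matrices such that column $\hat\jmath$ of $B^n_2$ is zero and $\sum_{j\in\mathcal J(i)}\mu^n_{ij}\Psi_{ij}(\alpha,\beta)=(B^n_1\alpha+B^n_2\beta)_i$ for all $i$ and all $(\alpha,\beta)\in\mathcal D$. $n$-th system in diffusion scale: for $x\in\mathbb Z^I_+$, the work-conserving action set is $\mathcal Z^n(x)=\{z\in\mathbb Z^{\mathcal G}_+: q_i\ge0,\ y_j\ge0,\ q_i\wedge y_j=0\ \forall(i,j)\in\mathcal E\}$ with $q_i=x_i-\sum_jz_{ij}$, $y_j=N^n_j-\sum_iz_{ij}$. Let $\bar z^n_{ij}=\xi^*_{ij}N^n_j$, $\bar x^n_i=\sum_j\bar z^n_{ij}$, $\mathcal S^n=\{\breve x\in\mathbb R^I:\sqrt n\breve x+\bar x^n\in\mathbb Z^I_+\}$, and $\breve{\mathcal Z}^n(\breve x)=\{\breve z:\sqrt n\breve z+\bar z^n\in\mathcal Z^n(\sqrt n\breve x+\bar x^n)\}$. Define $h^n_i:=n^{-1/2}(\lambda^n_i-\sum_{j\in\mathcal J(i)}\mu^n_{ij}\xi^*_{ij}N^n_j)$, the drift $b^n_i(\breve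 x,\breve z):=h^n_i-\sum_{j\in\mathcal J(i)}\mu^n_{ij}\breve z_{ij}$, $\breve q^n_i:=\breve x_i-\sum_j\breve z_{ij}$, $\breve y^n_j:=-\sum_i\breve z_{ij}$, and $\breve\zeta^n(\breve x,\breve z):=\langle e,\breve q^n\rangle\wedge\langle e,\breve y^n\rangle$. Here $e$ is the all-ones vector, $a^\pm$ are positive/negative parts, and $\Delta_I=\{u\in\mathbb R^I_+:\langle e,u\rangle=1\}$, $\Delta_J$ likewise. *)

theory Defs
  imports "HOL-Analysis.Analysis"
begin

text \<open>Classes are indexed by 1..I, pools by 1..J (natural numbers).
  Vectors in R^K are functions nat => real vanishing outside 1..K;
  arrays in R^G are functions nat => nat => real vanishing off the edge set E.\<close>

definition vecs :: "nat \<Rightarrow> (nat \<Rightarrow> real) set" where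
  "vecs K = {v. \<forall>k. k \<notin> {1..K} \<longrightarrow> v k = 0}"

definition mats :: "nat \<Rightarrow> nat \<Rightarrow> (nat \<Rightarrow> nat \<Rightarrow> real) set" where
  "mats K L = {M. \<forall>k l. k \<notin> {1..K} \<or> l \<notin> {1..L} \<longrightarrow> M k l = 0}"

definition arrays :: "(nat \<times> nat) set \<Rightarrow> (nat \<Rightarrow> nat \<Rightarrow> real) set" where
  "arrays E = {z. \<forall>i j. (i, j) \<notin> E \<longrightarrow> z i j = 0}"

definition mvec :: "nat \<Rightarrow> (nat \<Rightarrow> nat \<Rightarrow> real) \<Rightarrow> (nat \<Rightarrow> real) \<Rightarrow> nat \<Rightarrow> real" where
  "mvec L M v = (\<lambda>i. \<Sum>l\<in>{1..L}. M i l * v l)"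

definition std_simplex :: "nat \<Rightarrow> (nat \<Rightarrow> real) set" where
  "std_simplex K = {u \<in> vecs K. (\<forall>k. 0 \<le> u k) \<and> (\<Sum>k\<in>{1..K}. u k) = 1}"

definition posp :: "real \<Rightarrow> real" where "posp a = max a 0"
definition negp :: "real \<Rightarrow> real" where "negp a = max (- a) 0"

definition bip_vertices :: "nat \<Rightarrow> nat \<Rightarrow> (nat + nat) set" where
  "bip_vertices I J = Inl ` {1..I} \<union> Inr ` {1..J}"

definition bip_adj :: "(nat \<times> nat) set \<Rightarrow> (nat + nat) \<Rightarrow> (nat + nat) \<Rightarrow> bool" where
  "bip_adj E u v \<longleftrightarrow> (\<exists>i j. (i, j) \<in> E \<and> ((u = Inl i \<and> v = Inr j) \<or> (u = Inr j \<and> v = Inl i)))"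

definition is_bip_tree :: "nat \<Rightarrow> nat \<Rightarrow> (nat \<times> nat) set \<Rightarrow> bool" where
  "is_bip_tree I J E \<longleftrightarrow>
     E \<subseteq> {1..I} \<times> {1..J} \<and>
     (\<forall>u\<in>bip_vertices I J. \<forall>v\<in>bip_vertices I J. (u, v) \<in> {(a, b). bip_adj E a b}\<^sup>*) \<and>
     \<not> (\<exists>vs. 3 \<le> length vs \<and> distinct vs \<and>
            (\<forall>k < length vs - 1. bip_adj E (vs ! k) (vs ! (k + 1))) \<and>
            bip_adj E (last vs) (hd vs))"

definition Dset :: "nat \<Rightarrow> nat \<Rightarrow> ((nat \<Rightarrow> real) \<times> (nat \<Rightarrow> real)) set" where
  "Dset I J = {(\<alpha>, \<beta>). \<alpha> \<in> vecs I \<and> \<beta> \<in> vecs J \<and> (\<Sum>i\<in>{1..I}. \<alpha> i) = (\<Sum>j\<in>{1..J}. \<beta> j)}"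

definition Psi :: "nat \<Rightarrow> nat \<Rightarrow> (nat \<times> nat) set \<Rightarrow> (nat \<Rightarrow> real) \<Rightarrow> (nat \<Rightarrow> real) \<Rightarrow> nat \<Rightarrow> nat \<Rightarrow> real" where
  "Psi I J E \<alpha> \<beta> = (THE z. z \<in> arrays E \<and>
       (\<forall>i\<in>{1..I}. (\<Sum>j\<in>{1..J}. z i j) = \<alpha> i) \<and>
       (\<forall>j\<in>{1..J}. (\<Sum>i\<in>{1..I}. z i j) = \<beta> j))"

definition Bmats :: "nat \<Rightarrow> nat \<Rightarrow> (nat \<times> nat) set \<Rightarrow> (nat \<Rightarrow> nat \<Rightarrow> real) \<Rightarrow> nat
     \<Rightarrow> (nat \<Rightarrow> nat \<Rightarrow> real) \<times> (nat \<Rightarrow> nat \<Rightarrow> real)" where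
  "Bmats I J E mu jh = (THE (B1, B2). B1 \<in> mats I I \<and> B2 \<in> mats I J \<and>
       (\<forall>i. B2 i jh = 0) \<and>
       (\<forall>(\<alpha>, \<beta>) \<in> Dset I J. \<forall>i\<in>{1..I}.
          (\<Sum>j\<in>{j. (i, j) \<in> E}. mu i j * Psi I J E \<alpha> \<beta> i j) = mvec I B1 \<alpha> i + mvec J B2 \<beta> i))"

definition B1mat where "B1mat I J E mu jh = fst (Bmats I J E mu jh)"
definition B2mat where "B2mat I J E mu jh = snd (Bmats I J E mu jh)"

definition lp_feasible :: "nat \<Rightarrow> nat \<Rightarrow> (nat \<times> nat) set \<Rightarrow> (nat \<Rightarrow> real) \<Rightarrow> (nat \<Rightarrow> nat \<Rightarrow> real)
     \<Rightarrow> (nat \<Rightarrow> real) \<Rightarrow> (nat \<Rightarrow> nat \<Rightarrow> real) \<Rightarrow> bool" where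
  "lp_feasible I J E lam mu nu \<xi> \<longleftrightarrow> \<xi> \<in> arrays E \<and> (\<forall>i j. 0 \<le> \<xi> i j) \<and>
     (\<forall>i\<in>{1..I}. (\<Sum>j\<in>{1..J}. mu i j * nu j * \<xi> i j) = lam i)"

definition lp_obj :: "nat \<Rightarrow> nat \<Rightarrow> (nat \<Rightarrow> nat \<Rightarrow> real) \<Rightarrow> real" where
  "lp_obj I J \<xi> = Max ((\<lambda>j. \<Sum>i\<in>{1..I}. \<xi> i j) ` {1..J})"

definition unique_lp_solution where
  "unique_lp_solution I J E lam mu nu \<xi>s \<longleftrightarrow> lp_feasible I J E lam mu nu \<xi>s \<and>
     (\<forall>\<xi>. lp_feasible I J E lam mu nu \<xi> \<longrightarrow> lp_obj I J \<xi>s \<le> lp_obj I J \<xi>) \<and>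
     (\<forall>\<xi>. lp_feasible I J E lam mu nu \<xi> \<and> lp_obj I J \<xi> \<le> lp_obj I J \<xi>s \<longrightarrow> \<xi> = \<xi>s)"

definition Zws :: "nat \<Rightarrow> nat \<Rightarrow> (nat \<times> nat) set \<Rightarrow> (nat \<Rightarrow> nat) \<Rightarrow> (nat \<Rightarrow> real)
     \<Rightarrow> (nat \<Rightarrow> nat \<Rightarrow> real) set" where
  "Zws I J E N x = {z \<in> arrays E. (\<forall>i j. z i j \<in> \<nat>) \<and>
     (let q = (\<lambda>i. x i - (\<Sum>j\<in>{1..J}. z i j)); y = (\<lambda>j. real (N j) - (\<Sum>i\<in>{1..I}. z i j)) in
       (\<forall>i\<in>{1..I}. 0 \<le> q i) \<and> (\<forall>j\<in>{1..J}. 0 \<le> y j) \<and> (\<forall>(i, j)\<in>E. min (q i) (y j) = 0))}"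

definition zbar :: "(nat \<Rightarrow> nat \<Rightarrow> real) \<Rightarrow> (nat \<Rightarrow> nat) \<Rightarrow> nat \<Rightarrow> nat \<Rightarrow> real" where
  "zbar \<xi> N = (\<lambda>i j. \<xi> i j * real (N j))"

definition xbar :: "nat \<Rightarrow> (nat \<Rightarrow> nat \<Rightarrow> real) \<Rightarrow> (nat \<Rightarrow> nat) \<Rightarrow> nat \<Rightarrow> real" where
  "xbar J \<xi> N = (\<lambda>i. \<Sum>j\<in>{1..J}. zbar \<xi> N i j)"

definition Sset :: "nat \<Rightarrow> nat \<Rightarrow> nat \<Rightarrow> (nat \<Rightarrow> nat \<Rightarrow> real) \<Rightarrow> (nat \<Rightarrow> nat) \<Rightarrow> (nat \<Rightarrow> real) set" where
  "Sset n I J \<xi> N = {x \<in> vecs I. \<forall>i\<in>{1..I}. sqrt (real n) * x i + xbar J \<xi> N i \<in> \<nat>}"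

definition Zbr :: "nat \<Rightarrow> nat \<Rightarrow> nat \<Rightarrow> (nat \<times> nat) set \<Rightarrow> (nat \<Rightarrow> nat \<Rightarrow> real) \<Rightarrow> (nat \<Rightarrow> nat)
     \<Rightarrow> (nat \<Rightarrow> real) \<Rightarrow> (nat \<Rightarrow> nat \<Rightarrow> real) set" where
  "Zbr n I J E \<xi> N x = {z \<in> arrays E.
     (\<lambda>i j. sqrt (real n) * z i j + zbar \<xi> N i j) \<in> Zws I J E N (\<lambda>i. sqrt (real n) * x i + xbar J \<xi> N i)}"

definition hvec :: "nat \<Rightarrow> (nat \<times> nat) set \<Rightarrow> (nat \<Rightarrow> real) \<Rightarrow> (nat \<Rightarrow> nat \<Rightarrow> real)
     \<Rightarrow> (nat \<Rightarrow> nat) \<Rightarrow> (nat \<Rightarrow> nat \<Rightarrow> real) \<Rightarrow> nat \<Rightarrow> real" where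
  "hvec n E lam mu N \<xi> = (\<lambda>i. (lam i - (\<Sum>j\<in>{j. (i, j) \<in> E}. mu i j * \<xi> i j * real (N j))) / sqrt (real n))"

definition bdrift :: "nat \<Rightarrow> (nat \<times> nat) set \<Rightarrow> (nat \<Rightarrow> real) \<Rightarrow> (nat \<Rightarrow> nat \<Rightarrow> real)
     \<Rightarrow> (nat \<Rightarrow> nat) \<Rightarrow> (nat \<Rightarrow> nat \<Rightarrow> real) \<Rightarrow> (nat \<Rightarrow> real) \<Rightarrow> (nat \<Rightarrow> nat \<Rightarrow> real) \<Rightarrow> nat \<Rightarrow> real" where
  "bdrift n E lam mu N \<xi> x z = (\<lambda>i. hvec n E lam mu N \<xi> i - (\<Sum>j\<in>{j. (i, j) \<in> E}. mu i j * z i j))"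

definition qbr :: "nat \<Rightarrow> (nat \<Rightarrow> real) \<Rightarrow> (nat \<Rightarrow> nat \<Rightarrow> real) \<Rightarrow> nat \<Rightarrow> real" where
  "qbr J x z = (\<lambda>i. x i - (\<Sum>j\<in>{1..J}. z i j))"

definition ybr :: "nat \<Rightarrow> (nat \<Rightarrow> nat \<Rightarrow> real) \<Rightarrow> nat \<Rightarrow> real" where
  "ybr I z = (\<lambda>j. - (\<Sum>i\<in>{1..I}. z i j))"

definition zeta :: "nat \<Rightarrow> nat \<Rightarrow> (nat \<Rightarrow> real) \<Rightarrow> (nat \<Rightarrow> nat \<Rightarrow> real) \<Rightarrow> real" where
  "zeta I J x z = min (\<Sum>i\<in>{1..I}. qbr J x z i) (\<Sum>j\<in>{1..J}. ybr I z j)"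

end

theory Submission imports Defs begin

definition iwalk :: "('v \<Rightarrow> 'v \<Rightarrow> bool) \<Rightarrow> 'v list \<Rightarrow> bool" where
  "iwalk R vs \<longleftrightarrow> (\<forall>k < length vs - 1. R (vs!k) (vs!(k+1)))"

lemma iwalk_Nil[simp]: "iwalk R []" and iwalk_single[simp]: "iwalk R [v]"
  by (auto simp: iwalk_def)

lemma iwalk_Cons: "iwalk R (u # vs) \<longleftrightarrow> (vs \<noteq> [] \<longrightarrow> R u (hd vs)) \<and> iwalk R vs"
proof (cases vs)
  case Nil then show ?thesis by simp
next
  case (Cons v ws)
  have "iwalk R (u # v # ws) \<longleftrightarrow> R u v \<and> iwalk R (v # ws)"
    unfolding iwalk_def
    apply (auto simp: less_Suc_eq_0_disj)
    done
  then show ?thesis using Cons by simp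
qed

lemma iwalk_drop: "iwalk R vs \<Longrightarrow> iwalk R (drop m vs)"
  unfolding iwalk_def by (auto simp: add.commute add.left_commute)

lemma iwalk_take: "iwalk R vs \<Longrightarrow> iwalk R (take m vs)"
  unfolding iwalk_def by auto

lemma iwalk_mono: "iwalk R vs \<Longrightarrow> (\<And>u v. R u v \<Longrightarrow> S u v) \<Longrightarrow> iwalk S vs"
  unfolding iwalk_def by auto

lemma rtrancl_walk:
  assumes "(u, v) \<in> {(a, b). R a b}\<^sup>*"
  shows "\<exists>vs. vs \<noteq> [] \<and> hd vs = u \<and> last vs = v \<and> iwalk R vs"
  using assms
proof (induction rule: converse_rtrancl_induct)
  case base
  then show ?case by (intro exI[of _ "[v]"]) auto
next
  case (step a b)
  then obtain vs where "vs \<noteq> [] \<and> hd vs = b \<and> last vs = v \<and> iwalk R vs" by blast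
  then show ?case using step(1) by (intro exI[of _ "a # vs"]) (auto simp: iwalk_Cons)
qed

definition ein :: "nat + nat \<Rightarrow> nat + nat \<Rightarrow> nat \<Rightarrow> nat \<Rightarrow> real" where
  "ein u v = (\<lambda>i j. if (u = Inl i \<and> v = Inr j) \<or> (u = Inr j \<and> v = Inl i) then 1 else 0)"

fun pf :: "(nat + nat) list \<Rightarrow> nat \<Rightarrow> nat \<Rightarrow> real" where
  "pf (u # v # vs) = (\<lambda>i j. ein u v i j - pf (v # vs) i j)"
| "pf _ = (\<lambda>i j. 0)"

lemma pf_notin: "Inl i \<notin> set vs \<Longrightarrow> pf vs i j = 0"
  by (induction vs rule: pf.induct) (auto simp: ein_def)

lemma pf_arrays: "iwalk (bip_adj E) vs \<Longrightarrow> pf vs \<in> arrays E"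
proof (induction vs rule: pf.induct)
  case (1 u v vs)
  then have "bip_adj E u v" "pf (v # vs) \<in> arrays E" by (auto simp: iwalk_Cons)
  then show ?case by (auto simp: arrays_def ein_def bip_adj_def)
qed (auto simp: arrays_def)

definition dv :: "nat \<Rightarrow> nat \<Rightarrow> (nat \<Rightarrow> nat \<Rightarrow> real) \<Rightarrow> nat + nat \<Rightarrow> real" where
  "dv I J z w = (case w of Inl i \<Rightarrow> \<Sum>j\<in>{1..J}. z i j | Inr j \<Rightarrow> \<Sum>i\<in>{1..I}. z i j)"

lemma dv_diff: "dv I J (\<lambda>i j. a i j - b i j) w = dv I J a w - dv I J b w"
  by (cases w) (auto simp: dv_def sum_subtractf)

lemma dv_zero: "dv I J (\<lambda>i j. 0) w = 0"
  by (cases w) (auto simp: dv_def)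

lemma dv_lin: "finite K \<Longrightarrow> dv I J (\<lambda>i j. \<Sum>k\<in>K. c k * f k i j) w = (\<Sum>k\<in>K. c k * dv I J (f k) w)"
  by (cases w) (auto simp: dv_def sum_distrib_left intro: sum.swap)

lemma dv_ein:
  assumes "E \<subseteq> {1..I} \<times> {1..J}" "bip_adj E u v"
  shows "dv I J (ein u v) w = (if w = u then 1 else 0) + (if w = v then 1 else 0)"
proof -
  obtain i' j' where e: "(i', j') \<in> E" "(u = Inl i' \<and> v = Inr j') \<or> (u = Inr j' \<and> v = Inl i')"
    using assms(2) unfolding bip_adj_def by blast
  then have r: "i' \<in> {1..I}" "j' \<in> {1..J}" using assms(1) by auto
  show ?thesis
  proof (cases w)
    case (Inl i)
    have "dv I J (ein u v) w = (\<Sum>j\<in>{1..J}. if i = i' then (if j = j' then 1 else 0) else 0)"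
      unfolding Inl using e by (auto simp: dv_def ein_def intro!: sum.cong)
    also have "\<dots> = (if i = i' then 1 else 0)" using r by simp
    finally show ?thesis using e Inl by auto
  next
    case (Inr j)
    have "dv I J (ein u v) w = (\<Sum>i\<in>{1..I}. if j = j' then (if i = i' then 1 else 0) else 0)"
      unfolding Inr using e by (auto simp: dv_def ein_def intro!: sum.cong)
    also have "\<dots> = (if j = j' then 1 else 0)" using r by simp
    finally show ?thesis using e Inr by auto
  qed
qed

lemma dv_pf:
  assumes "E \<subseteq> {1..I} \<times> {1..J}"
  shows "iwalk (bip_adj E) vs \<Longrightarrow> vs \<noteq> [] \<Longrightarrow>
    dv I J (pf vs) w = (if w = hd vs then 1 else 0) + (-1) ^ length vs * (if w = last vs then 1 else 0)"
proof (induction vs rule: pf.induct)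
  case (1 u v vs)
  then have a: "bip_adj E u v" "iwalk (bip_adj E) (v # vs)" by (auto simp: iwalk_Cons)
  have "dv I J (pf (u # v # vs)) w = dv I J (ein u v) w - dv I J (pf (v # vs)) w"
    by (simp add: dv_diff)
  also have "\<dots> = (if w = u then 1 else 0) + (if w = v then 1 else 0)
      - ((if w = v then 1 else 0) + (-1) ^ length (v # vs) * (if w = last (v # vs) then 1 else 0))"
    using 1(1)[OF a(2)] dv_ein[OF assms a(1)] by simp
  finally show ?case by simp
next
  case ("2_2" v)
  then show ?case by (simp add: dv_zero)
qed simp

lemma sum_other_nonzero:
  assumes "finite A" "a \<in> A" "f a \<noteq> (0::real)" "(\<Sum>x\<in>A. f x) = 0"
  shows "\<exists>b\<in>A. b \<noteq> a \<and> f b \<noteq> 0"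
proof (rule ccontr)
  assume "\<not> ?thesis"
  then have "(\<Sum>x\<in>A. f x) = f a"
    using assms by (subst sum.remove[of _ a]) (auto intro!: sum.neutral)
  then show False using assms by simp
qed

lemma tree_unique:
  assumes tree: "is_bip_tree I J E" and z: "z \<in> arrays E"
    and rows: "\<forall>i\<in>{1..I}. (\<Sum>j\<in>{1..J}. z i j) = 0"
    and cols: "\<forall>j\<in>{1..J}. (\<Sum>i\<in>{1..I}. z i j) = 0"
  shows "z i0 j0 = 0"
proof (rule ccontr)
  assume nz: "z i0 j0 \<noteq> 0"
  have box: "E \<subseteq> {1..I} \<times> {1..J}" using tree by (simp add: is_bip_tree_def)
  have nocyc: "\<not> (\<exists>vs. 3 \<le> length vs \<and> distinct vs \<and> iwalk (bip_adj E) vs \<and> bip_adj E (last vs) (hd vs))"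
    using tree by (simp add: is_bip_tree_def iwalk_def)
  define S where "S u v \<longleftrightarrow> (\<exists>i j. z i j \<noteq> 0 \<and> ((u = Inl i \<and> v = Inr j) \<or> (u = Inr j \<and> v = Inl i)))" for u v
  have zE: "z i j \<noteq> 0 \<Longrightarrow> (i, j) \<in> E" for i j using z by (auto simp: arrays_def)
  have SE: "S u v \<Longrightarrow> bip_adj E u v" for u v
    unfolding S_def bip_adj_def using zE by blast
  have Ssym: "S u v \<Longrightarrow> S v u" for u v unfolding S_def by blast
  have Sirr: "\<not> S u u" for u unfolding S_def by auto
  have SV: "S u v \<Longrightarrow> u \<in> bip_vertices I J" for u v
    unfolding S_def bip_vertices_def using zE box by blast
  have ext: "\<exists>x. S x w \<and> x \<noteq> p" if Swp: "S w p" for w p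
  proof -
    obtain i j where ij: "z i j \<noteq> 0" "(w = Inl i \<and> p = Inr j) \<or> (w = Inr j \<and> p = Inl i)"
      using Swp unfolding S_def by blast
    have r: "i \<in> {1..I}" "j \<in> {1..J}" using zE[OF ij(1)] box by auto
    show ?thesis
    proof (cases "w = Inl i \<and> p = Inr j")
      case True
      obtain j' where "j' \<in> {1..J}" "j' \<noteq> j" "z i j' \<noteq> 0"
        using sum_other_nonzero[of "{1..J}" j "\<lambda>j. z i j"] rows r ij(1) by auto
      then show ?thesis using True unfolding S_def by (intro exI[of _ "Inr j'"]) auto
    next
      case False
      then have wp: "w = Inr j \<and> p = Inl i" using ij by blast
      obtain i' where "i' \<in> {1..I}" "i' \<noteq> i" "z i' j \<noteq> 0"
        using sum_other_nonzero[of "{1..I}" i "\<lambda>i. z i j"] cols r ij(1) by auto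
      then show ?thesis using wp unfolding S_def by (intro exI[of _ "Inl i'"]) auto
    qed
  qed
  have grow: "\<exists>vs. length vs = m + 2 \<and> distinct vs \<and> iwalk S vs" for m
  proof (induction m)
    case 0
    show ?case using nz by (intro exI[of _ "[Inl i0, Inr j0]"]) (auto simp: iwalk_Cons S_def)
  next
    case (Suc m)
    then obtain vs where vs: "length vs = m + 2" "distinct vs" "iwalk S vs" by blast
    then obtain w p rest where vsd: "vs = w # p # rest"
      by (metis Suc_length_conv add_2_eq_Suc')
    have "S w p" using vs(3) vsd by (simp add: iwalk_Cons)
    then obtain x where x: "S x w" "x \<noteq> p" using ext by blast
    show ?case
    proof (cases "x \<in> set vs")
      case False
      then show ?thesis using vs x vsd by (intro exI[of _ "x # vs"]) (auto simp: iwalk_Cons)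
    next
      case True
      then obtain k where k: "k < length vs" "vs ! k = x" by (meson in_set_conv_nth)
      have k0: "k \<noteq> 0"
      proof
        assume "k = 0"
        then have "x = w" using k vsd by simp
        then show False using x(1) Sirr by simp
      qed
      have k1: "k \<noteq> 1" using k x(2) vsd by auto
      define cs where "cs = take (Suc k) vs"
      have "3 \<le> length cs" using k k0 k1 unfolding cs_def by auto
      moreover have "distinct cs" using vs(2) unfolding cs_def by simp
      moreover have "iwalk (bip_adj E) cs"
        using iwalk_mono[OF iwalk_take[OF vs(3)], of "bip_adj E"] SE unfolding cs_def by blast
      moreover have "last cs = x"
      proof -
        have "cs \<noteq> []" "length cs = Suc k" using k unfolding cs_def by auto
        then show ?thesis using k unfolding cs_def by (simp add: last_conv_nth)
      qed
      moreover have "hd cs = w" unfolding cs_def vsd by simp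
      moreover have "bip_adj E x w" using SE[OF x(1)] .
      ultimately show ?thesis using nocyc by blast
    qed
  qed
  define V where "V = bip_vertices I J"
  have finV: "finite V" unfolding V_def bip_vertices_def by simp
  obtain vs where vs: "length vs = card V + 2" "distinct vs" "iwalk S vs" using grow by blast
  have "set vs \<subseteq> V"
  proof
    fix v assume "v \<in> set vs"
    then obtain t where t: "t < length vs" "vs ! t = v" by (meson in_set_conv_nth)
    show "v \<in> V"
    proof (cases "t < length vs - 1")
      case True
      then have "S (vs ! t) (vs ! (t+1))" using vs(3) unfolding iwalk_def by blast
      then show ?thesis using SV t V_def by blast
    next
      case False
      then have tt: "t = Suc (t - 1)" "t - 1 < length vs - 1" using t vs(1) by auto
      then have "S (vs ! (t - 1)) (vs ! (t - 1 + 1))" using vs(3) unfolding iwalk_def by blast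
      then have "S (vs ! t) (vs ! (t - 1))" using tt Ssym by simp
      then show ?thesis using SV t V_def by blast
    qed
  qed
  then have "length vs \<le> card V" using vs(2) finV by (metis card_mono distinct_card)
  then show False using vs(1) by simp
qed

lemma sum_delta_mult: "finite A \<Longrightarrow> (\<Sum>k\<in>A. f k * (if i = k then 1 else (0::real))) = (if i \<in> A then f i else 0)"
proof -
  assume "finite A"
  have "(\<lambda>k. f k * (if i = k then 1 else (0::real))) = (\<lambda>k. if i = k then f k else 0)" by auto
  then have "(\<Sum>k\<in>A. f k * (if i = k then 1 else (0::real))) = (\<Sum>k\<in>A. if i = k then f k else 0)" by (intro sum.cong) auto
  also have "\<dots> = (if i \<in> A then f i else 0)" using \<open>finite A\<close> by (simp add: sum.delta')
  finally show ?thesis .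
qed

lemma dv_add: "dv I J (\<lambda>i j. a i j + b i j) w = dv I J a w + dv I J b w"
  by (cases w) (auto simp: dv_def sum.distrib)

locale btree =
  fixes I J :: nat and E :: "(nat \<times> nat) set" and jh :: nat
  assumes tree: "is_bip_tree I J E" and jh: "jh \<in> {1..J}"
begin

lemma box: "E \<subseteq> {1..I} \<times> {1..J}" using tree by (simp add: is_bip_tree_def)

lemma finE: "finite {j. (i, j) \<in> E}"
  by (rule finite_subset[of _ "{1..J}"]) (use box in auto)

definition Wk :: "nat + nat \<Rightarrow> (nat + nat) list set" where
  "Wk v = {vs. vs \<noteq> [] \<and> hd vs = v \<and> last vs = Inr jh \<and> iwalk (bip_adj E) vs}"

definition P :: "nat + nat \<Rightarrow> (nat + nat) list" where
  "P v = arg_min length (\<lambda>vs. vs \<in> Wk v)"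

lemma P_min: "vs \<in> Wk v \<Longrightarrow> P v \<in> Wk v \<and> length (P v) \<le> length vs"
  unfolding P_def by (metis arg_min_nat_lemma)

lemma Wk_ne: assumes "v \<in> bip_vertices I J" shows "\<exists>vs. vs \<in> Wk v"
proof -
  have "Inr jh \<in> bip_vertices I J" using jh by (simp add: bip_vertices_def)
  then have "(v, Inr jh) \<in> {(a, b). bip_adj E a b}\<^sup>*"
    using tree assms unfolding is_bip_tree_def by blast
  then show ?thesis using rtrancl_walk[of v "Inr jh" "bip_adj E"] unfolding Wk_def by blast
qed

lemma P_in: "v \<in> bip_vertices I J \<Longrightarrow> P v \<in> Wk v"
  using Wk_ne P_min by blast

lemma drop_Wk: "vs \<in> Wk v \<Longrightarrow> m < length vs \<Longrightarrow> drop m vs \<in> Wk (vs ! m)"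
  unfolding Wk_def by (auto simp: hd_drop_conv_nth iwalk_drop)

lemma dvP:
  assumes "v \<in> bip_vertices I J" "w \<noteq> Inr jh"
  shows "dv I J (pf (P v)) w = (if w = v then 1 else 0)"
  using P_in[OF assms(1)] dv_pf[OF box, of "P v" w] assms(2) unfolding Wk_def by auto

lemma Inl_V: "k \<in> {1..I} \<Longrightarrow> Inl k \<in> bip_vertices I J"
  and Inr_V: "j \<in> {1..J} \<Longrightarrow> Inr j \<in> bip_vertices I J"
  by (auto simp: bip_vertices_def)

definition zc :: "(nat \<Rightarrow> real) \<Rightarrow> (nat \<Rightarrow> real) \<Rightarrow> nat \<Rightarrow> nat \<Rightarrow> real" where
  "zc \<alpha> \<beta> = (\<lambda>i j. (\<Sum>k\<in>{1..I}. \<alpha> k * pf (P (Inl k)) i j)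
     + (\<Sum>j'\<in>{1..J}-{jh}. \<beta> j' * pf (P (Inr j')) i j))"

lemma zc_arrays: "zc \<alpha> \<beta> \<in> arrays E"
proof -
  have a: "pf (P v) \<in> arrays E" if "v \<in> bip_vertices I J" for v
    using pf_arrays P_in[OF that] unfolding Wk_def by blast
  have "zc \<alpha> \<beta> i j = 0" if "(i, j) \<notin> E" for i j
  proof -
    have "pf (P (Inl k)) i j = 0" if "k \<in> {1..I}" for k
      using a[OF Inl_V[OF that]] \<open>(i, j) \<notin> E\<close> by (auto simp: arrays_def)
    moreover have "pf (P (Inr k)) i j = 0" if "k \<in> {1..J}" for k
      using a[OF Inr_V[OF that]] \<open>(i, j) \<notin> E\<close> by (auto simp: arrays_def)
    ultimately show ?thesis unfolding zc_def by simp
  qed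
  then show ?thesis by (auto simp: arrays_def)
qed

lemma dv_zc: "w \<noteq> Inr jh \<Longrightarrow> dv I J (zc \<alpha> \<beta>) w =
   (\<Sum>k\<in>{1..I}. \<alpha> k * (if w = Inl k then 1 else 0)) + (\<Sum>j'\<in>{1..J}-{jh}. \<beta> j' * (if w = Inr j' then 1 else 0))"
proof -
  assume w: "w \<noteq> Inr jh"
  have "dv I J (zc \<alpha> \<beta>) w = (\<Sum>k\<in>{1..I}. \<alpha> k * dv I J (pf (P (Inl k))) w)
      + (\<Sum>j'\<in>{1..J}-{jh}. \<beta> j' * dv I J (pf (P (Inr j'))) w)"
    unfolding zc_def by (simp add: dv_add dv_lin)
  also have "\<dots> = (\<Sum>k\<in>{1..I}. \<alpha> k * (if w = Inl k then 1 else 0)) + (\<Sum>j'\<in>{1..J}-{jh}. \<beta> j' * (if w = Inr j' then 1 else 0))"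
    using w by (intro arg_cong2[where f="(+)"] sum.cong refl) (auto simp: dvP Inl_V Inr_V)
  finally show ?thesis .
qed

lemma zc_rows: "i \<in> {1..I} \<Longrightarrow> (\<Sum>j\<in>{1..J}. zc \<alpha> \<beta> i j) = \<alpha> i"
  using dv_zc[of "Inl i" \<alpha> \<beta>] by (simp add: dv_def sum_delta_mult)

lemma zc_cols: "j \<in> {1..J} \<Longrightarrow> j \<noteq> jh \<Longrightarrow> (\<Sum>i\<in>{1..I}. zc \<alpha> \<beta> i j) = \<beta> j"
  using dv_zc[of "Inr j" \<alpha> \<beta>] by (simp add: dv_def sum_delta_mult)

lemma zc_col_jh:
  assumes "(\<alpha>, \<beta>) \<in> Dset I J"
  shows "(\<Sum>i\<in>{1..I}. zc \<alpha> \<beta> i jh) = \<beta> jh"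
proof -
  have "(\<Sum>j\<in>{1..J}. \<Sum>i\<in>{1..I}. zc \<alpha> \<beta> i j) = (\<Sum>i\<in>{1..I}. \<Sum>j\<in>{1..J}. zc \<alpha> \<beta> i j)"
    by (rule sum.swap)
  also have "\<dots> = (\<Sum>i\<in>{1..I}. \<alpha> i)" by (rule sum.cong[OF refl], rule zc_rows)
  also have "\<dots> = (\<Sum>j\<in>{1..J}. \<beta> j)" using assms by (simp add: Dset_def)
  finally have e: "(\<Sum>j\<in>{1..J}. \<Sum>i\<in>{1..I}. zc \<alpha> \<beta> i j) = (\<Sum>j\<in>{1..J}. \<beta> j)" .
  have "(\<Sum>j\<in>{1..J}. \<Sum>i\<in>{1..I}. zc \<alpha> \<beta> i j) = (\<Sum>i\<in>{1..I}. zc \<alpha> \<beta> i jh) + (\<Sum>j\<in>{1..J}-{jh}. \<Sum>i\<in>{1..I}. zc \<alpha> \<beta> i j)"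
    using jh by (simp add: sum.remove)
  moreover have "(\<Sum>j\<in>{1..J}-{jh}. \<Sum>i\<in>{1..I}. zc \<alpha> \<beta> i j) = (\<Sum>j\<in>{1..J}-{jh}. \<beta> j)"
    by (rule sum.cong[OF refl], rule zc_cols) auto
  moreover have "(\<Sum>j\<in>{1..J}. \<beta> j) = \<beta> jh + (\<Sum>j\<in>{1..J}-{jh}. \<beta> j)"
    using jh by (simp add: sum.remove)
  ultimately show ?thesis using e by simp
qed

lemma Psi_eq:
  assumes "z \<in> arrays E" "\<forall>i\<in>{1..I}. (\<Sum>j\<in>{1..J}. z i j) = \<alpha> i" "\<forall>j\<in>{1..J}. (\<Sum>i\<in>{1..I}. z i j) = \<beta> j"
  shows "Psi I J E \<alpha> \<beta> = z"
  unfolding Psi_def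
proof (rule the_equality)
  show "z \<in> arrays E \<and> (\<forall>i\<in>{1..I}. (\<Sum>j\<in>{1..J}. z i j) = \<alpha> i) \<and> (\<forall>j\<in>{1..J}. (\<Sum>i\<in>{1..I}. z i j) = \<beta> j)"
    using assms by blast
next
  fix z' assume z': "z' \<in> arrays E \<and> (\<forall>i\<in>{1..I}. (\<Sum>j\<in>{1..J}. z' i j) = \<alpha> i) \<and> (\<forall>j\<in>{1..J}. (\<Sum>i\<in>{1..I}. z' i j) = \<beta> j)"
  have d: "(\<lambda>i j. z' i j - z i j) \<in> arrays E" using z' assms(1) by (auto simp: arrays_def)
  have "z' i j - z i j = 0" for i j
    by (rule tree_unique[OF tree d]) (use z' assms in \<open>auto simp: sum_subtractf\<close>)
  then show "z' = z" by (intro ext) simp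
qed

lemma Psi_zc: "(\<alpha>, \<beta>) \<in> Dset I J \<Longrightarrow> Psi I J E \<alpha> \<beta> = zc \<alpha> \<beta>"
proof (rule Psi_eq)
  assume d: "(\<alpha>, \<beta>) \<in> Dset I J"
  show "zc \<alpha> \<beta> \<in> arrays E" by (rule zc_arrays)
  show "\<forall>i\<in>{1..I}. (\<Sum>j\<in>{1..J}. zc \<alpha> \<beta> i j) = \<alpha> i" using zc_rows by blast
  show "\<forall>j\<in>{1..J}. (\<Sum>i\<in>{1..I}. zc \<alpha> \<beta> i j) = \<beta> j"
  proof
    fix j assume "j \<in> {1..J}"
    then show "(\<Sum>i\<in>{1..I}. zc \<alpha> \<beta> i j) = \<beta> j"
      using zc_cols[of j] zc_col_jh[OF d] by (cases "j = jh") auto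
  qed
qed

end

lemma swap_lemma: "(\<Sum>j\<in>A. m j * (\<Sum>k\<in>B. c k * p k j)) = (\<Sum>k\<in>B. (\<Sum>j\<in>A. m j * p k j) * (c k :: real))"
  unfolding sum_distrib_left sum_distrib_right by (subst sum.swap) (simp add: mult_ac)

lemma mvec_delta: "k \<in> {1..L} \<Longrightarrow> mvec L M (\<lambda>l. if l = k then 1 else 0) i = M i k"
proof -
  assume k: "k \<in> {1..L}"
  have "mvec L M (\<lambda>l. if l = k then 1 else 0) i = (\<Sum>l\<in>{1..L}. if l = k then M i l else 0)"
    unfolding mvec_def by (intro sum.cong) auto
  also have "\<dots> = M i k" using k by (simp add: sum.delta)
  finally show ?thesis .
qed

lemma mvec_zero: "mvec L M (\<lambda>l. 0) i = 0" by (simp add: mvec_def)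

lemma mvec_diff: "mvec L M (\<lambda>l. a l - b l) i = mvec L M a i - mvec L M b i"
  by (simp add: mvec_def right_diff_distrib sum_subtractf)

lemma delta_vecs: "k \<in> {1..L} \<Longrightarrow> (\<lambda>l. if l = k then 1 else 0) \<in> vecs L"
  by (auto simp: vecs_def)

lemma delta_sum: "k \<in> {1..(L::nat)} \<Longrightarrow> (\<Sum>l\<in>{1..L}. (if l = k then 1 else 0::real)) = 1"
  by (subst sum.delta) auto

context btree
begin

definition F1 :: "(nat \<Rightarrow> nat \<Rightarrow> real) \<Rightarrow> nat \<Rightarrow> nat \<Rightarrow> real" where
  "F1 mu = (\<lambda>i k. if i \<in> {1..I} \<and> k \<in> {1..I} then \<Sum>j\<in>{j. (i, j) \<in> E}. mu i j * pf (P (Inl k)) i j else 0)"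

definition F2 :: "(nat \<Rightarrow> nat \<Rightarrow> real) \<Rightarrow> nat \<Rightarrow> nat \<Rightarrow> real" where
  "F2 mu = (\<lambda>i k. if i \<in> {1..I} \<and> k \<in> {1..J} \<and> k \<noteq> jh then \<Sum>j\<in>{j. (i, j) \<in> E}. mu i j * pf (P (Inr k)) i j else 0)"

definition Bprop where
  "Bprop mu B1 B2 \<longleftrightarrow> B1 \<in> mats I I \<and> B2 \<in> mats I J \<and>
       (\<forall>i. B2 i jh = 0) \<and>
       (\<forall>(\<alpha>, \<beta>) \<in> Dset I J. \<forall>i\<in>{1..I}.
          (\<Sum>j\<in>{j. (i, j) \<in> E}. mu i j * Psi I J E \<alpha> \<beta> i j) = mvec I B1 \<alpha> i + mvec J B2 \<beta> i)"

lemma Bprop_F_eq: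
  assumes ab: "(\<alpha>, \<beta>) \<in> Dset I J" and i: "i \<in> {1..I}"
  shows "(\<Sum>j\<in>{j. (i, j) \<in> E}. mu i j * Psi I J E \<alpha> \<beta> i j) = mvec I (F1 mu) \<alpha> i + mvec J (F2 mu) \<beta> i"
proof -
  let ?E = "{j. (i, j) \<in> E}"
  have "(\<Sum>j\<in>?E. mu i j * Psi I J E \<alpha> \<beta> i j) = (\<Sum>j\<in>?E. mu i j * zc \<alpha> \<beta> i j)"
    using Psi_zc ab by simp
  also have "\<dots> = (\<Sum>j\<in>?E. mu i j * (\<Sum>k\<in>{1..I}. \<alpha> k * pf (P (Inl k)) i j))
      + (\<Sum>j\<in>?E. mu i j * (\<Sum>j'\<in>{1..J}-{jh}. \<beta> j' * pf (P (Inr j')) i j))"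
    unfolding zc_def by (simp add: distrib_left sum.distrib)
  also have "\<dots> = (\<Sum>k\<in>{1..I}. (\<Sum>j\<in>?E. mu i j * pf (P (Inl k)) i j) * \<alpha> k)
      + (\<Sum>j'\<in>{1..J}-{jh}. (\<Sum>j\<in>?E. mu i j * pf (P (Inr j')) i j) * \<beta> j')"
    by (simp only: swap_lemma)
  also have "(\<Sum>k\<in>{1..I}. (\<Sum>j\<in>?E. mu i j * pf (P (Inl k)) i j) * \<alpha> k) = mvec I (F1 mu) \<alpha> i"
    unfolding mvec_def F1_def using i by (intro sum.cong) auto
  also have "(\<Sum>j'\<in>{1..J}-{jh}. (\<Sum>j\<in>?E. mu i j * pf (P (Inr j')) i j) * \<beta> j') = mvec J (F2 mu) \<beta> i"
  proof -
    have "mvec J (F2 mu) \<beta> i = F2 mu i jh * \<beta> jh + (\<Sum>j'\<in>{1..J}-{jh}. F2 mu i j' * \<beta> j')"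
      unfolding mvec_def using jh by (simp add: sum.remove)
    also have "\<dots> = (\<Sum>j'\<in>{1..J}-{jh}. (\<Sum>j\<in>?E. mu i j * pf (P (Inr j')) i j) * \<beta> j')"
      using i by (auto simp: F2_def intro!: sum.cong)
    finally show ?thesis by simp
  qed
  finally show ?thesis .
qed

lemma Bprop_F: "Bprop mu (F1 mu) (F2 mu)"
  unfolding Bprop_def using Bprop_F_eq by (auto simp: mats_def F1_def F2_def)

lemma Bprop_uniq:
  assumes C: "Bprop mu C1 C2" and D: "Bprop mu D1 D2"
  shows "C1 = D1 \<and> C2 = D2"
proof -
  let ?dl = "\<lambda>k l. if l = k then 1 else (0::real)"
  have key: "\<And>\<alpha> \<beta> i. (\<alpha>, \<beta>) \<in> Dset I J \<Longrightarrow> i \<in> {1..I} \<Longrightarrow>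
      mvec I C1 \<alpha> i + mvec J C2 \<beta> i = mvec I D1 \<alpha> i + mvec J D2 \<beta> i"
    using C D unfolding Bprop_def by fastforce
  have c: "C1 \<in> mats I I" "C2 \<in> mats I J" "\<forall>i. C2 i jh = 0"
   and d: "D1 \<in> mats I I" "D2 \<in> mats I J" "\<forall>i. D2 i jh = 0" using C D unfolding Bprop_def by auto
  have "C1 i k = D1 i k" for i k
  proof (cases "i \<in> {1..I} \<and> k \<in> {1..I}")
    case True
    have "(?dl k, ?dl jh) \<in> Dset I J"
      using True jh by (simp add: Dset_def delta_vecs delta_sum)
    from key[OF this] True show ?thesis using c d jh by (simp add: mvec_delta)
  next
    case False
    then show ?thesis using c d by (auto simp: mats_def)
  qed
  moreover have "C2 i k = D2 i k" for i k
  proof (cases "i \<in> {1..I} \<and> k \<in> {1..J} \<and> k \<noteq> jh")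
    case True
    have "((\<lambda>l. 0), (\<lambda>l. ?dl k l - ?dl jh l)) \<in> Dset I J"
      using True jh by (auto simp: Dset_def vecs_def sum_subtractf delta_sum)
    from key[OF this] True show ?thesis using c d jh by (simp add: mvec_delta mvec_zero mvec_diff)
  next
    case False
    then show ?thesis using c d by (auto simp: mats_def)
  qed
  ultimately show ?thesis by (auto intro!: ext)
qed

lemma Bmats_F: "Bmats I J E mu jh = (F1 mu, F2 mu)"
proof -
  have "Bmats I J E mu jh = (THE x. case x of (B1, B2) \<Rightarrow> Bprop mu B1 B2)"
    unfolding Bmats_def Bprop_def by simp
  also have "\<dots> = (F1 mu, F2 mu)"
  proof (rule the_equality)
    show "case (F1 mu, F2 mu) of (B1, B2) \<Rightarrow> Bprop mu B1 B2" using Bprop_F by simp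
    fix x assume "case x of (B1, B2) \<Rightarrow> Bprop mu B1 B2"
    then show "x = (F1 mu, F2 mu)" using Bprop_uniq[OF _ Bprop_F] by (cases x) auto
  qed
  finally show ?thesis .
qed

lemma B1mat_F: "B1mat I J E mu jh = F1 mu" and B2mat_F: "B2mat I J E mu jh = F2 mu"
  by (simp_all add: B1mat_def B2mat_def Bmats_F)

end

context btree
begin

lemma P_Inl_shape:
  assumes k: "k \<in> {1..I}"
  shows "\<exists>j1 rest. P (Inl k) = Inl k # Inr j1 # rest \<and> (k, j1) \<in> E \<and> Inl k \<notin> set (Inr j1 # rest)"
proof -
  have W: "P (Inl k) \<in> Wk (Inl k)" using P_in Inl_V k by blast
  then obtain vs where Pd: "P (Inl k) = Inl k # vs" unfolding Wk_def by (cases "P (Inl k)") auto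
  have "vs \<noteq> []" using W Pd unfolding Wk_def by auto
  then obtain v rest where vsd: "vs = v # rest" by (cases vs) auto
  have "bip_adj E (Inl k) v" using W Pd vsd unfolding Wk_def by (simp add: iwalk_Cons)
  then obtain j1 where j1: "v = Inr j1" "(k, j1) \<in> E" unfolding bip_adj_def by auto
  have "Inl k \<notin> set vs"
  proof
    assume "Inl k \<in> set vs"
    then obtain m where m: "m < length vs" "vs ! m = Inl k" by (meson in_set_conv_nth)
    have "drop (Suc m) (P (Inl k)) \<in> Wk (P (Inl k) ! Suc m)"
      by (rule drop_Wk[OF W]) (use m Pd in simp)
    then have "drop (Suc m) (P (Inl k)) \<in> Wk (Inl k)" using m Pd by simp
    from P_min[OF this] have "length (P (Inl k)) \<le> length (drop (Suc m) (P (Inl k)))" by blast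
    then show False using m Pd by simp
  qed
  then show ?thesis using Pd vsd j1 by blast
qed

definition f :: "nat \<Rightarrow> nat" where "f k = length (P (Inl k))"

lemma f_ge2: "k \<in> {1..I} \<Longrightarrow> 2 \<le> f k"
  using P_Inl_shape[of k] unfolding f_def by auto

lemma P_ih: assumes "(ih, jh) \<in> E" shows "P (Inl ih) = [Inl ih, Inr jh]"
proof -
  have ih: "ih \<in> {1..I}" using assms box by auto
  have "[Inl ih, Inr jh] \<in> Wk (Inl ih)" using assms
    unfolding Wk_def by (auto simp: iwalk_Cons bip_adj_def)
  from P_min[OF this] have le: "length (P (Inl ih)) \<le> 2" by simp
  obtain j1 rest where s: "P (Inl ih) = Inl ih # Inr j1 # rest"
    using P_Inl_shape[OF ih] by blast
  then have "rest = []" using le by simp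
  moreover have "last (P (Inl ih)) = Inr jh" using P_in[OF Inl_V[OF ih]] unfolding Wk_def by simp
  ultimately show ?thesis using s by simp
qed

lemma f_less:
  assumes i: "i \<in> {1..I}" and k: "k \<in> {1..I}" and ik: "i \<noteq> k" and mem: "Inl i \<in> set (P (Inl k))"
  shows "f i < f k"
proof -
  have W: "P (Inl k) \<in> Wk (Inl k)" using P_in Inl_V k by blast
  obtain m where m: "m < length (P (Inl k))" "P (Inl k) ! m = Inl i" using mem by (meson in_set_conv_nth)
  have m0: "m \<noteq> 0"
  proof
    assume "m = 0"
    then have "Inl i = Inl k" using m W unfolding Wk_def by (auto simp: hd_conv_nth)
    then show False using ik by simp
  qed
  have "drop m (P (Inl k)) \<in> Wk (Inl i)" using drop_Wk[OF W m(1)] m(2) by simp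
  from P_min[OF this] have "f i \<le> length (P (Inl k)) - m" unfolding f_def by simp
  then show ?thesis using m0 m unfolding f_def by simp
qed

lemma F1_off:
  assumes i: "i \<in> {1..I}" and k: "k \<in> {1..I}" and ik: "i \<noteq> k" and nz: "F1 mu i k \<noteq> 0"
  shows "f i < f k"
proof (rule f_less[OF i k ik], rule ccontr)
  assume "Inl i \<notin> set (P (Inl k))"
  then have "pf (P (Inl k)) i j = 0" for j by (rule pf_notin)
  then have "F1 mu i k = 0" unfolding F1_def by simp
  then show False using nz by simp
qed

lemma F1_diag:
  assumes k: "k \<in> {1..I}" and pos: "\<And>j. (k, j) \<in> E \<Longrightarrow> 0 < mu k j"
  shows "0 < F1 mu k k"
proof -
  obtain j1 rest where s: "P (Inl k) = Inl k # Inr j1 # rest" "(k, j1) \<in> E" "Inl k \<notin> set (Inr j1 # rest)"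
    using P_Inl_shape[OF k] by blast
  have "F1 mu k k = (\<Sum>j\<in>{j. (k, j) \<in> E}. mu k j * (if j = j1 then 1 else 0))"
    unfolding F1_def using k s(1) pf_notin[OF s(3)] by (auto simp: ein_def intro!: sum.cong)
  also have "\<dots> = (\<Sum>j\<in>{j. (k, j) \<in> E}. if j = j1 then mu k j else 0)" by (intro sum.cong) auto
  also have "\<dots> = mu k j1" using s(2) finE by (simp add: sum.delta)
  finally show ?thesis using pos[OF s(2)] by simp
qed

lemma F1_ih: assumes "(ih, jh) \<in> E" shows "F1 mu ih ih = mu ih jh"
proof -
  have ih: "ih \<in> {1..I}" using assms box by auto
  have "F1 mu ih ih = (\<Sum>j\<in>{j. (ih, j) \<in> E}. mu ih j * (if j = jh then 1 else 0))"
    unfolding F1_def using ih P_ih[OF assms] by (auto simp: ein_def intro!: sum.cong)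
  also have "\<dots> = (\<Sum>j\<in>{j. (ih, j) \<in> E}. if j = jh then mu ih j else 0)" by (intro sum.cong) auto
  also have "\<dots> = mu ih jh" using assms finE by (simp add: sum.delta)
  finally show ?thesis .
qed

lemma ordering:
  assumes hat: "(ih, jh) \<in> E"
  shows "\<exists>\<sigma>. bij_betw \<sigma> {1..I} {1..I} \<and> \<sigma> I = ih \<and>
           (\<forall>k\<in>{1..I}. \<forall>l\<in>{1..I}. k < l \<longrightarrow> F1 mu (\<sigma> k) (\<sigma> l) = 0)"
proof -
  have ih: "ih \<in> {1..I}" using hat box by auto
  define g :: "nat \<Rightarrow> int" where "g k = (if k = ih then 1 else - int (f k))" for k
  have fih: "f ih = 2" using P_ih[OF hat] unfolding f_def by simp
  have key: "g k < g i" if "i \<in> {1..I}" "k \<in> {1..I}" "i \<noteq> k" "F1 mu i k \<noteq> 0" for i k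
  proof -
    have lt: "f i < f k" using F1_off[OF that] .
    have "k \<noteq> ih" using lt fih f_ge2[OF that(1)] by auto
    then show ?thesis using lt unfolding g_def by auto
  qed
  define L where "L = sort_key g [1..<I+1]"
  have Ld: "distinct L" "set L = {1..I}" "length L = I" "sorted (map g L)"
    unfolding L_def by auto
  define \<sigma> where "\<sigma> k = L ! (k - 1)" for k
  have b1: "bij_betw (\<lambda>k. k - 1) {1..I} {..<I}"
  proof (rule bij_betw_byWitness[where f'="\<lambda>k. k + 1"])
    show "\<forall>a\<in>{1..I}. a - 1 + 1 = a" by simp
    show "\<forall>a'\<in>{..<I}. a' + 1 - 1 = a'" by simp
    show "(\<lambda>k. k - 1) ` {1..I} \<subseteq> {..<I}" proof (rule image_subsetI)
      fix x :: nat assume "x \<in> {1..I}" then show "x - 1 \<in> {..<I}" by (simp, arith)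
    qed
    show "(\<lambda>k. k + 1) ` {..<I} \<subseteq> {1..I}" by (rule image_subsetI) simp
  qed
  have b2: "bij_betw ((!) L) {..<I} {1..I}"
    using bij_betw_nth[OF Ld(1)] Ld by simp
  have bij: "bij_betw \<sigma> {1..I} {1..I}"
    using bij_betw_trans[OF b1 b2] unfolding \<sigma>_def comp_def by simp
  have mono: "g (\<sigma> k) \<le> g (\<sigma> l)" if "k \<in> {1..I}" "l \<in> {1..I}" "k \<le> l" for k l
  proof -
    have "map g L ! (k - 1) \<le> map g L ! (l - 1)"
      by (rule sorted_nth_mono[OF Ld(4)]) (use that Ld(3) in auto)
    then show ?thesis using that Ld(3) unfolding \<sigma>_def by simp
  qed
  have "\<sigma> I = ih"
  proof -
    have im: "\<sigma> ` {1..I} = {1..I}" using bij by (simp add: bij_betw_def)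
    have "ih \<in> \<sigma> ` {1..I}" using ih by (simp only: im)
    then obtain p where p: "p \<in> {1..I}" "\<sigma> p = ih" by (metis imageE)
    have "I \<in> {1..I}" using ih by auto
    moreover have "p \<le> I" using p(1) by simp
    ultimately have "g (\<sigma> p) \<le> g (\<sigma> I)" using mono[OF p(1)] by blast
    then have "g ih \<le> g (\<sigma> I)" using p(2) by simp
    show ?thesis
    proof (rule ccontr)
      assume "\<sigma> I \<noteq> ih"
      then have "g (\<sigma> I) \<le> 0" unfolding g_def by simp
      moreover have "g ih = 1" unfolding g_def by simp
      ultimately show False using \<open>g ih \<le> g (\<sigma> I)\<close> by simp
    qed
  qed
  moreover have "\<forall>k\<in>{1..I}. \<forall>l\<in>{1..I}. k < l \<longrightarrow> F1 mu (\<sigma> k) (\<sigma> l) = 0"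
  proof (intro ballI impI, rule ccontr)
    fix k l assume kl: "k \<in> {1..I}" "l \<in> {1..I}" "k < l" and nz: "F1 mu (\<sigma> k) (\<sigma> l) \<noteq> 0"
    have r: "\<sigma> k \<in> {1..I}" "\<sigma> l \<in> {1..I}" using bij_betw_apply[OF bij] kl by auto
    have ne: "\<sigma> k \<noteq> \<sigma> l"
    proof
      assume "\<sigma> k = \<sigma> l"
      then have "k = l" using bij_betw_imp_inj_on[OF bij] kl(1,2) by (simp add: inj_on_eq_iff)
      then show False using kl by simp
    qed
    have "g (\<sigma> l) < g (\<sigma> k)" using key[OF r ne nz] .
    moreover have "g (\<sigma> k) \<le> g (\<sigma> l)" using mono kl by simp
    ultimately show False by simp
  qed
  ultimately show ?thesis using bij by blast
qed

end

lemma mvec_scale: "mvec L M (\<lambda>l. c * a l) i = c * mvec L M a i"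
  by (simp add: mvec_def sum_distrib_left mult_ac)

lemma mvec_cong: "(\<And>l. l \<in> {1..L} \<Longrightarrow> a l = b l) \<Longrightarrow> mvec L M a i = mvec L M b i"
  unfolding mvec_def by (intro sum.cong) auto

lemma mvec_normalize:
  assumes nn: "\<forall>l\<in>{1..L}. 0 \<le> a l" and S: "S = (\<Sum>l\<in>{1..L}. a l)"
    and u: "\<forall>l\<in>{1..L}. 0 < S \<longrightarrow> u l = a l / S"
  shows "S * mvec L M u i = mvec L M a i"
proof (cases "0 < S")
  case True
  have "mvec L M u i = mvec L M (\<lambda>l. (1 / S) * a l) i"
    using u True by (intro mvec_cong) auto
  also have "\<dots> = (1 / S) * mvec L M a i" by (rule mvec_scale)
  finally show ?thesis using True by simp
next
  case False
  have "S = 0" using False S nn sum_nonneg[of "{1..L}" a] by force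
  then have "\<forall>l\<in>{1..L}. a l = 0" using sum_nonneg_eq_0_iff[of "{1..L}" a] S nn by auto
  then have "mvec L M a i = mvec L M (\<lambda>l. 0) i" by (intro mvec_cong) auto
  then show ?thesis using \<open>S = 0\<close> by (simp add: mvec_zero)
qed

lemma simplex_build:
  assumes nn: "\<forall>l\<in>{1..L}. 0 \<le> a l" and S: "S = (\<Sum>l\<in>{1..L}. a l)" and l0: "l0 \<in> {1..(L::nat)}"
  defines "u \<equiv> (\<lambda>l. if l \<in> {1..L} then (if 0 < S then a l / S else (if l = l0 then 1 else 0)) else 0)"
  shows "u \<in> std_simplex L"
proof -
  have "(\<Sum>l\<in>{1..L}. u l) = 1"
  proof (cases "0 < S")
    case True
    have "(\<Sum>l\<in>{1..L}. u l) = (\<Sum>l\<in>{1..L}. a l / S)" unfolding u_def using True by (intro sum.cong) auto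
    also have "\<dots> = S / S" unfolding S by (simp only: sum_divide_distrib)
    finally show ?thesis using True by simp
  next
    case False
    have "(\<Sum>l\<in>{1..L}. u l) = (\<Sum>l\<in>{1..L}. if l = l0 then 1 else 0)" unfolding u_def using False by (intro sum.cong) auto
    also have "\<dots> = 1" using l0 by (subst sum.delta) auto
    finally show ?thesis .
  qed
  moreover have "\<forall>l. 0 \<le> u l" unfolding u_def using nn S by (auto intro: divide_nonneg_pos)
  moreover have "u \<in> vecs L" unfolding u_def vecs_def by auto
  ultimately show ?thesis unfolding std_simplex_def by blast
qed

lemma arith_aux:
  assumes "p + m = (Q::real)" "q + m = Y"
  shows "h - (X - Q * A - Y * B) = h - (X - p * A) + B * q + m * (A + B)"
proof -
  have "Q = p + m" "Y = q + m" using assms by simp_all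
  then show ?thesis by (simp add: algebra_simps)
qed

context btree
begin

lemma drift:
  fixes n :: nat and lamn :: "nat \<Rightarrow> real" and mun :: "nat \<Rightarrow> nat \<Rightarrow> real" and Nn :: "nat \<Rightarrow> nat"
  assumes crp_sum: "\<And>j. j \<in> {1..J} \<Longrightarrow> (\<Sum>i\<in>{1..I}. \<xi>s i j) = 1"
    and n_pos: "1 \<le> n" and I1: "1 \<le> I"
    and x: "x \<in> Sset n I J \<xi>s Nn" and z: "z \<in> Zbr n I J E \<xi>s Nn x"
  shows "\<exists>uc us. uc \<in> std_simplex I \<and> us \<in> std_simplex J \<and>
              (\<forall>i\<in>{1..I}.
                 bdrift n E lamn mun Nn \<xi>s x z i =
                   hvec n E lamn mun Nn \<xi>s i
                   - mvec I (F1 mun) (\<lambda>k. x k - posp (\<Sum>l\<in>{1..I}. x l) * uc k) i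
                   + mvec J (F2 mun) us i * negp (\<Sum>l\<in>{1..I}. x l)
                   + zeta I J x z * (mvec I (F1 mun) uc i + mvec J (F2 mun) us i))"
proof -
  define sn where "sn = sqrt (real n)"
  have sn: "0 < sn" using n_pos unfolding sn_def by simp
  have zA: "z \<in> arrays E" using z unfolding Zbr_def by blast
  have xv: "x \<in> vecs I" using x unfolding Sset_def by blast
  have zoff: "z i j = 0" if "i \<notin> {1..I} \<or> j \<notin> {1..J}" for i j
    using zA box that unfolding arrays_def by blast
  have ZW: "(\<lambda>i j. sn * z i j + zbar \<xi>s Nn i j) \<in> Zws I J E Nn (\<lambda>i. sn * x i + xbar J \<xi>s Nn i)"
    using z unfolding Zbr_def sn_def by blast
  let ?q = "qbr J x z" and ?y = "ybr I z"
  have qnn: "\<forall>i\<in>{1..I}. 0 \<le> ?q i"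
  proof
    fix i assume i: "i \<in> {1..I}"
    have "0 \<le> (sn * x i + xbar J \<xi>s Nn i) - (\<Sum>j\<in>{1..J}. sn * z i j + zbar \<xi>s Nn i j)"
      using ZW i unfolding Zws_def Let_def by blast
    also have "\<dots> = sn * ?q i"
      by (simp add: xbar_def qbr_def sum.distrib sum_distrib_left right_diff_distrib)
    finally show "0 \<le> ?q i" using sn by (simp add: zero_le_mult_iff)
  qed
  have ynn: "\<forall>j\<in>{1..J}. 0 \<le> ?y j"
  proof
    fix j assume j: "j \<in> {1..J}"
    have "0 \<le> real (Nn j) - (\<Sum>i\<in>{1..I}. sn * z i j + zbar \<xi>s Nn i j)"
      using ZW j unfolding Zws_def Let_def by blast
    also have "(\<Sum>i\<in>{1..I}. sn * z i j + zbar \<xi>s Nn i j) = sn * (\<Sum>i\<in>{1..I}. z i j) + (\<Sum>i\<in>{1..I}. \<xi>s i j) * real (Nn j)"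
      by (simp add: zbar_def sum.distrib sum_distrib_left sum_distrib_right)
    also have "(\<Sum>i\<in>{1..I}. \<xi>s i j) = 1" using crp_sum j by simp
    finally have "0 \<le> sn * ?y j" by (simp add: ybr_def)
    then show "0 \<le> ?y j" using sn by (simp add: zero_le_mult_iff)
  qed
  define \<alpha> where "\<alpha> i = (\<Sum>j\<in>{1..J}. z i j)" for i
  define \<beta> where "\<beta> j = (\<Sum>i\<in>{1..I}. z i j)" for j
  have al: "\<alpha> k = x k - ?q k" for k unfolding \<alpha>_def qbr_def by simp
  have be: "\<beta> j = - ?y j" for j unfolding \<beta>_def ybr_def by simp
  have D: "(\<alpha>, \<beta>) \<in> Dset I J"
  proof -
    have "\<alpha> \<in> vecs I" unfolding vecs_def \<alpha>_def using zoff by auto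
    moreover have "\<beta> \<in> vecs J" unfolding vecs_def \<beta>_def using zoff by auto
    moreover have "(\<Sum>i\<in>{1..I}. \<alpha> i) = (\<Sum>j\<in>{1..J}. \<beta> j)" unfolding \<alpha>_def \<beta>_def by (rule sum.swap)
    ultimately show ?thesis unfolding Dset_def by blast
  qed
  have Pz: "Psi I J E \<alpha> \<beta> = z" by (rule Psi_eq) (use zA in \<open>auto simp: \<alpha>_def \<beta>_def\<close>)
  define Q where "Q = (\<Sum>i\<in>{1..I}. ?q i)"
  define Y where "Y = (\<Sum>j\<in>{1..J}. ?y j)"
  have sumx: "(\<Sum>l\<in>{1..I}. x l) = Q - Y"
  proof -
    have "(\<Sum>l\<in>{1..I}. x l) = (\<Sum>l\<in>{1..I}. \<alpha> l) + Q" unfolding Q_def al by (simp add: sum_subtractf)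
    also have "(\<Sum>l\<in>{1..I}. \<alpha> l) = (\<Sum>j\<in>{1..J}. \<beta> j)" using D unfolding Dset_def by simp
    also have "\<dots> = - Y" unfolding Y_def be by (simp add: sum_negf)
    finally show ?thesis by simp
  qed
  have zeta_eq: "zeta I J x z = min Q Y" unfolding zeta_def Q_def Y_def by simp
  define uc where "uc = (\<lambda>l. if l \<in> {1..I} then (if 0 < Q then ?q l / Q else (if l = 1 then 1 else 0)) else 0)"
  define us where "us = (\<lambda>l. if l \<in> {1..J} then (if 0 < Y then ?y l / Y else (if l = jh then 1 else 0)) else 0)"
  have ucs: "uc \<in> std_simplex I" unfolding uc_def by (rule simplex_build[OF qnn Q_def]) (use I1 in simp)
  have uss: "us \<in> std_simplex J" unfolding us_def by (rule simplex_build[OF ynn Y_def jh])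
  have Quc: "Q * mvec I (F1 mun) uc i = mvec I (F1 mun) ?q i" for i
    by (rule mvec_normalize[OF qnn Q_def]) (simp add: uc_def)
  have Yus: "Y * mvec J (F2 mun) us i = mvec J (F2 mun) ?y i" for i
    by (rule mvec_normalize[OF ynn Y_def]) (simp add: us_def)
  have "bdrift n E lamn mun Nn \<xi>s x z i =
                   hvec n E lamn mun Nn \<xi>s i
                   - mvec I (F1 mun) (\<lambda>k. x k - posp (\<Sum>l\<in>{1..I}. x l) * uc k) i
                   + mvec J (F2 mun) us i * negp (\<Sum>l\<in>{1..I}. x l)
                   + zeta I J x z * (mvec I (F1 mun) uc i + mvec J (F2 mun) us i)" if i: "i \<in> {1..I}" for i
  proof -
    have "(\<Sum>j\<in>{j. (i, j) \<in> E}. mun i j * z i j) = mvec I (F1 mun) \<alpha> i + mvec J (F2 mun) \<beta> i"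
      using Bprop_F_eq[OF D i, of mun] Pz by simp
    also have "mvec I (F1 mun) \<alpha> i = mvec I (F1 mun) x i - mvec I (F1 mun) ?q i"
      unfolding al by (rule mvec_diff)
    also have "mvec J (F2 mun) \<beta> i = - mvec J (F2 mun) ?y i"
      unfolding be using mvec_scale[of J "F2 mun" "-1" ?y i] by simp
    finally have S: "(\<Sum>j\<in>{j. (i, j) \<in> E}. mun i j * z i j) = mvec I (F1 mun) x i - Q * mvec I (F1 mun) uc i - Y * mvec J (F2 mun) us i"
      using Quc Yus by simp
    have M: "mvec I (F1 mun) (\<lambda>k. x k - posp (Q - Y) * uc k) i = mvec I (F1 mun) x i - posp (Q - Y) * mvec I (F1 mun) uc i"
      using mvec_diff[of I "F1 mun" x "\<lambda>k. posp (Q - Y) * uc k" i] mvec_scale[of I "F1 mun" "posp (Q - Y)" uc i] by simp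
    have pn: "posp (Q - Y) + min Q Y = Q" "negp (Q - Y) + min Q Y = Y" unfolding posp_def negp_def by auto
    show ?thesis unfolding bdrift_def sumx zeta_eq M S
      by (rule arith_aux[OF pn])
  qed
  then show ?thesis using ucs uss by blast
qed

end

theorem proposition1:
  fixes I J :: nat and E :: "(nat \<times> nat) set"
    and lam :: "nat \<Rightarrow> nat \<Rightarrow> real"          (* lam n i = lambda^n_i *)
    and mu :: "nat \<Rightarrow> nat \<Rightarrow> nat \<Rightarrow> real"     (* mu n i j = mu^n_ij *)
    and N :: "nat \<Rightarrow> nat \<Rightarrow> nat"             (* N n j = N^n_j *)
    and laml :: "nat \<Rightarrow> real" and nu :: "nat \<Rightarrow> real" and mul :: "nat \<Rightarrow> nat \<Rightarrow> real"
    and \<xi>s :: "nat \<Rightarrow> nat \<Rightarrow> real" and n ih jh :: nat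
  assumes tree: "is_bip_tree I J E"
    and lam_pos: "\<And>m i. 1 \<le> m \<Longrightarrow> i \<in> {1..I} \<Longrightarrow> 0 < lam m i"
    and mu_pos: "\<And>m i j. 1 \<le> m \<Longrightarrow> (i, j) \<in> E \<Longrightarrow> 0 < mu m i j"
    and lam_lim: "\<And>i. i \<in> {1..I} \<Longrightarrow> 0 < laml i \<and> (\<lambda>m. lam m i / real m) \<longlonglongrightarrow> laml i"
    and N_lim: "\<And>j. j \<in> {1..J} \<Longrightarrow> 0 < nu j \<and> (\<lambda>m. real (N m j) / real m) \<longlonglongrightarrow> nu j"
    and mu_lim: "\<And>i j. (i, j) \<in> E \<Longrightarrow> 0 < mul i j \<and> (\<lambda>m. mu m i j) \<longlonglongrightarrow> mul i j"
    and lam_conv: "\<And>i. i \<in> {1..I} \<Longrightarrow> convergent (\<lambda>m. (lam m i - real m * laml i) / sqrt (real m))"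
    and mu_conv: "\<And>i j. (i, j) \<in> E \<Longrightarrow> convergent (\<lambda>m. sqrt (real m) * (mu m i j - mul i j))"
    and N_conv: "\<And>j. j \<in> {1..J} \<Longrightarrow> convergent (\<lambda>m. sqrt (real m) * (real (N m j) / real m - nu j))"
    and crp: "unique_lp_solution I J E laml mul nu \<xi>s"
    and crp_sum: "\<And>j. j \<in> {1..J} \<Longrightarrow> (\<Sum>i\<in>{1..I}. \<xi>s i j) = 1"
    and crp_pos: "\<And>i j. (i, j) \<in> E \<Longrightarrow> 0 < \<xi>s i j"
    and n_pos: "1 \<le> n"
    and hat: "(ih, jh) \<in> E"
  shows "(\<forall>x \<in> Sset n I J \<xi>s (N n). \<forall>z \<in> Zbr n I J E \<xi>s (N n) x.
            \<exists>uc us. uc \<in> std_simplex I \<and> us \<in> std_simplex J \<and>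
              (\<forall>i\<in>{1..I}.
                 bdrift n E (lam n) (mu n) (N n) \<xi>s x z i =
                   hvec n E (lam n) (mu n) (N n) \<xi>s i
                   - mvec I (B1mat I J E (mu n) jh)
                       (\<lambda>k. x k - posp (\<Sum>l\<in>{1..I}. x l) * uc k) i
                   + mvec J (B2mat I J E (mu n) jh) us i * negp (\<Sum>l\<in>{1..I}. x l)
                   + zeta I J x z * (mvec I (B1mat I J E (mu n) jh) uc i
                                     + mvec J (B2mat I J E (mu n) jh) us i)))
         \<and> (\<forall>i. B2mat I J E (mu n) jh i jh = 0)
         \<and> (\<exists>\<sigma>. bij_betw \<sigma> {1..I} {1..I} \<and> \<sigma> I = ih \<and>
              (\<forall>k\<in>{1..I}. \<forall>l\<in>{1..I}. k < l \<longrightarrow> B1mat I J E (mu n) jh (\<sigma> k) (\<sigma> l) = 0) \<and>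
              (\<forall>k\<in>{1..I}. 0 < B1mat I J E (mu n) jh (\<sigma> k) (\<sigma> k)) \<and>
              B1mat I J E (mu n) jh ih ih = mu n ih jh)"
proof -
  have box: "E \<subseteq> {1..I} \<times> {1..J}" using tree by (simp add: is_bip_tree_def)
  have jhr: "jh \<in> {1..J}" and ihr: "ih \<in> {1..I}" using hat box by auto
  interpret bt: btree I J E jh using tree jhr by unfold_locales
  have B1: "B1mat I J E (mu n) jh = bt.F1 (mu n)" by (rule bt.B1mat_F)
  have B2: "B2mat I J E (mu n) jh = bt.F2 (mu n)" by (rule bt.B2mat_F)
  have mup: "\<And>i j. (i, j) \<in> E \<Longrightarrow> 0 < mu n i j" using mu_pos n_pos by blast
  have I1: "1 \<le> I" using ihr by simp
  have P1: "\<forall>x \<in> Sset n I J \<xi>s (N n). \<forall>z \<in> Zbr n I J E \<xi>s (N n) x.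
            \<exists>uc us. uc \<in> std_simplex I \<and> us \<in> std_simplex J \<and>
              (\<forall>i\<in>{1..I}.
                 bdrift n E (lam n) (mu n) (N n) \<xi>s x z i =
                   hvec n E (lam n) (mu n) (N n) \<xi>s i
                   - mvec I (bt.F1 (mu n))
                       (\<lambda>k. x k - posp (\<Sum>l\<in>{1..I}. x l) * uc k) i
                   + mvec J (bt.F2 (mu n)) us i * negp (\<Sum>l\<in>{1..I}. x l)
                   + zeta I J x z * (mvec I (bt.F1 (mu n)) uc i
                                     + mvec J (bt.F2 (mu n)) us i))"
  proof (intro ballI)
    fix x z assume x: "x \<in> Sset n I J \<xi>s (N n)" and z: "z \<in> Zbr n I J E \<xi>s (N n) x"
    show "\<exists>uc us. uc \<in> std_simplex I \<and> us \<in> std_simplex J \<and>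
              (\<forall>i\<in>{1..I}.
                 bdrift n E (lam n) (mu n) (N n) \<xi>s x z i =
                   hvec n E (lam n) (mu n) (N n) \<xi>s i
                   - mvec I (bt.F1 (mu n))
                       (\<lambda>k. x k - posp (\<Sum>l\<in>{1..I}. x l) * uc k) i
                   + mvec J (bt.F2 (mu n)) us i * negp (\<Sum>l\<in>{1..I}. x l)
                   + zeta I J x z * (mvec I (bt.F1 (mu n)) uc i
                                     + mvec J (bt.F2 (mu n)) us i))"
      by (rule bt.drift[where \<xi>s=\<xi>s and n=n and x=x and z=z and Nn="N n" and lamn="lam n" and mun="mu n"])
        (use crp_sum n_pos I1 x z in auto)
  qed
  have P2: "\<forall>i. bt.F2 (mu n) i jh = 0" by (simp add: bt.F2_def)
  obtain \<sigma> where \<sigma>: "bij_betw \<sigma> {1..I} {1..I}" "\<sigma> I = ih"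
      "\<forall>k\<in>{1..I}. \<forall>l\<in>{1..I}. k < l \<longrightarrow> bt.F1 (mu n) (\<sigma> k) (\<sigma> l) = 0"
    using bt.ordering[OF hat] by blast
  have "\<forall>k\<in>{1..I}. 0 < bt.F1 (mu n) (\<sigma> k) (\<sigma> k)"
  proof
    fix k assume "k \<in> {1..I}"
    then have "\<sigma> k \<in> {1..I}" by (rule bij_betw_apply[OF \<sigma>(1)])
    then show "0 < bt.F1 (mu n) (\<sigma> k) (\<sigma> k)"
      by (rule bt.F1_diag[where mu="mu n"]) (rule mup)
  qed
  moreover have "bt.F1 (mu n) ih ih = mu n ih jh" by (rule bt.F1_ih[OF hat])
  ultimately show ?thesis unfolding B1 B2 using P1 P2 \<sigma> by blast
qed

end
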